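(* Let $\mathcal C$ be a normal category, let $X \xrightarrow{k} A \xleftarrow{s} B$ be an extremally epic cospan in $\mathcal C$, and let $f\colon X\to Y$, $g\colon B\to Y$. Then $f$ and $g$ commute relatively to $(k,s)$ if and only if the $(k,s)$-commutator $[f,g]_{k,s}$ is the zero subobject of $Y$.
   Context: A normal category is a pointed regular category in which every regular epimorphism is a normal epimorphism. Given a cospan $X \xrightarrow{k} A \xleftarrow{s} B$, morphisms $f\colon X\to Y$ and $g\colon B\to Y$ commute relatively to $(k,s)$ if there exists $\varphi\colon A\to Y$ with $\varphi\circ k=f$ and $\varphi\circ s=g$. The cospan is extremally epic if whenever $k=m\circ k'$ and $s=m\circ s'$ for some monomorphism $m\colon M\to A$, $m$ is an isomorphism. For such a cospan, let $\langle k,s\rangle\colon X+B\to A$ be the induced morphism and $\kappa_{k,s}\colon X\diamond_{k,s}B\to X+B$ its kernel; the $(k,s)$-commutator $[f,g]_{k,s}\leq Y$ is the image of $\langle f,g\rangle\circ\kappa_{k,s}$. *)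

theory Defs
  imports Main
begin

text \<open>Elementary (one-sorted-arrow) categories, given by object set, arrow set,
  domain, codomain, identities and composition.  comp C g f is g after f.\<close>

record ('o, 'm) category =
  Obj :: "'o set"
  Arr :: "'m set"
  cdom :: "'m \<Rightarrow> 'o"
  ccod :: "'m \<Rightarrow> 'o"
  cid :: "'o \<Rightarrow> 'm"
  comp :: "'m \<Rightarrow> 'm \<Rightarrow> 'm"

definition hom :: "('o, 'm, 'x) category_scheme \<Rightarrow> 'o \<Rightarrow> 'o \<Rightarrow> 'm set" where
  "hom C a b = {f \<in> Arr C. cdom C f = a \<and> ccod C f = b}"

definition category :: "('o, 'm, 'x) category_scheme \<Rightarrow> bool" where
  "category C \<longleftrightarrow>
     (\<forall>f \<in> Arr C. cdom C f \<in> Obj C \<and> ccod C f \<in> Obj C) \<and>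
     (\<forall>a \<in> Obj C. cid C a \<in> hom C a a) \<and>
     (\<forall>f \<in> Arr C. \<forall>g \<in> Arr C. ccod C f = cdom C g \<longrightarrow>
         comp C g f \<in> hom C (cdom C f) (ccod C g)) \<and>
     (\<forall>f \<in> Arr C. comp C f (cid C (cdom C f)) = f \<and> comp C (cid C (ccod C f)) f = f) \<and>
     (\<forall>f \<in> Arr C. \<forall>g \<in> Arr C. \<forall>h \<in> Arr C. ccod C f = cdom C g \<and> ccod C g = cdom C h \<longrightarrow>
         comp C h (comp C g f) = comp C (comp C h g) f)"

definition mono :: "('o, 'm, 'x) category_scheme \<Rightarrow> 'm \<Rightarrow> bool" where
  "mono C m \<longleftrightarrow> m \<in> Arr C \<and>
     (\<forall>g \<in> Arr C. \<forall>h \<in> Arr C. ccod C g = cdom C m \<and> ccod C h = cdom C m \<and> cdom C g = cdom C h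
        \<and> comp C m g = comp C m h \<longrightarrow> g = h)"

definition iso :: "('o, 'm, 'x) category_scheme \<Rightarrow> 'm \<Rightarrow> bool" where
  "iso C f \<longleftrightarrow> f \<in> Arr C \<and>
     (\<exists>g \<in> hom C (ccod C f) (cdom C f).
        comp C g f = cid C (cdom C f) \<and> comp C f g = cid C (ccod C f))"

definition initial :: "('o, 'm, 'x) category_scheme \<Rightarrow> 'o \<Rightarrow> bool" where
  "initial C z \<longleftrightarrow> z \<in> Obj C \<and> (\<forall>a \<in> Obj C. \<exists>!f. f \<in> hom C z a)"

definition terminal :: "('o, 'm, 'x) category_scheme \<Rightarrow> 'o \<Rightarrow> bool" where
  "terminal C t \<longleftrightarrow> t \<in> Obj C \<and> (\<forall>a \<in> Obj C. \<exists>!f. f \<in> hom C a t)"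

definition zero_obj :: "('o, 'm, 'x) category_scheme \<Rightarrow> 'o \<Rightarrow> bool" where
  "zero_obj C z \<longleftrightarrow> initial C z \<and> terminal C z"

definition pointed :: "('o, 'm, 'x) category_scheme \<Rightarrow> bool" where
  "pointed C \<longleftrightarrow> (\<exists>z. zero_obj C z)"

definition zero_mor :: "('o, 'm, 'x) category_scheme \<Rightarrow> 'o \<Rightarrow> 'o \<Rightarrow> 'm \<Rightarrow> bool" where
  "zero_mor C a b f \<longleftrightarrow> f \<in> hom C a b \<and>
     (\<exists>z g h. zero_obj C z \<and> g \<in> hom C a z \<and> h \<in> hom C z b \<and> f = comp C h g)"

definition pullback :: "('o, 'm, 'x) category_scheme \<Rightarrow> 'm \<Rightarrow> 'm \<Rightarrow> 'm \<Rightarrow> 'm \<Rightarrow> bool" where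
  "pullback C f g p1 p2 \<longleftrightarrow>
     f \<in> Arr C \<and> g \<in> Arr C \<and> ccod C f = ccod C g \<and>
     p1 \<in> Arr C \<and> p2 \<in> Arr C \<and> cdom C p1 = cdom C p2 \<and>
     ccod C p1 = cdom C f \<and> ccod C p2 = cdom C g \<and> comp C f p1 = comp C g p2 \<and>
     (\<forall>q1 \<in> Arr C. \<forall>q2 \<in> Arr C. cdom C q1 = cdom C q2 \<and>
        ccod C q1 = cdom C f \<and> ccod C q2 = cdom C g \<and> comp C f q1 = comp C g q2 \<longrightarrow>
        (\<exists>!u. u \<in> hom C (cdom C q1) (cdom C p1) \<and> comp C p1 u = q1 \<and> comp C p2 u = q2))"

definition finitely_complete :: "('o, 'm, 'x) category_scheme \<Rightarrow> bool" where
  "finitely_complete C \<longleftrightarrow> (\<exists>t. terminal C t) \<and>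
     (\<forall>f \<in> Arr C. \<forall>g \<in> Arr C. ccod C f = ccod C g \<longrightarrow> (\<exists>p1 p2. pullback C f g p1 p2))"

definition coequalizer :: "('o, 'm, 'x) category_scheme \<Rightarrow> 'm \<Rightarrow> 'm \<Rightarrow> 'm \<Rightarrow> bool" where
  "coequalizer C f g q \<longleftrightarrow>
     f \<in> Arr C \<and> g \<in> Arr C \<and> cdom C f = cdom C g \<and> ccod C f = ccod C g \<and>
     q \<in> Arr C \<and> cdom C q = ccod C f \<and> comp C q f = comp C q g \<and>
     (\<forall>r \<in> Arr C. cdom C r = ccod C f \<and> comp C r f = comp C r g \<longrightarrow>
        (\<exists>!u. u \<in> hom C (ccod C q) (ccod C r) \<and> comp C u q = r))"

definition regular_epi :: "('o, 'm, 'x) category_scheme \<Rightarrow> 'm \<Rightarrow> bool" where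
  "regular_epi C q \<longleftrightarrow> (\<exists>f g. coequalizer C f g q)"

definition normal_epi :: "('o, 'm, 'x) category_scheme \<Rightarrow> 'm \<Rightarrow> bool" where
  "normal_epi C q \<longleftrightarrow> (\<exists>k z. zero_mor C (cdom C k) (ccod C k) z \<and> coequalizer C k z q)"

definition regular_category :: "('o, 'm, 'x) category_scheme \<Rightarrow> bool" where
  "regular_category C \<longleftrightarrow> category C \<and> finitely_complete C \<and>
     (\<forall>f p1 p2. pullback C f f p1 p2 \<longrightarrow> (\<exists>q. coequalizer C p1 p2 q)) \<and>
     (\<forall>e f p1 p2. regular_epi C e \<and> pullback C f e p1 p2 \<longrightarrow> regular_epi C p1)"

definition normal_category :: "('o, 'm, 'x) category_scheme \<Rightarrow> bool" where
  "normal_category C \<longleftrightarrow> pointed C \<and> regular_category C \<and>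
     (\<forall>q. regular_epi C q \<longrightarrow> normal_epi C q)"

definition coproduct :: "('o, 'm, 'x) category_scheme \<Rightarrow> 'o \<Rightarrow> 'o \<Rightarrow> 'o \<Rightarrow> 'm \<Rightarrow> 'm \<Rightarrow> bool" where
  "coproduct C X B P i1 i2 \<longleftrightarrow> i1 \<in> hom C X P \<and> i2 \<in> hom C B P \<and>
     (\<forall>Z \<in> Obj C. \<forall>f \<in> hom C X Z. \<forall>g \<in> hom C B Z.
        (\<exists>!u. u \<in> hom C P Z \<and> comp C u i1 = f \<and> comp C u i2 = g))"

definition kernel :: "('o, 'm, 'x) category_scheme \<Rightarrow> 'm \<Rightarrow> 'm \<Rightarrow> bool" where
  "kernel C u \<kappa> \<longleftrightarrow> u \<in> Arr C \<and> \<kappa> \<in> Arr C \<and> ccod C \<kappa> = cdom C u \<and>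
     zero_mor C (cdom C \<kappa>) (ccod C u) (comp C u \<kappa>) \<and>
     (\<forall>h \<in> Arr C. ccod C h = cdom C u \<and> zero_mor C (cdom C h) (ccod C u) (comp C u h) \<longrightarrow>
        (\<exists>!v. v \<in> hom C (cdom C h) (cdom C \<kappa>) \<and> comp C \<kappa> v = h))"

definition image_of :: "('o, 'm, 'x) category_scheme \<Rightarrow> 'm \<Rightarrow> 'm \<Rightarrow> bool" where
  "image_of C h m \<longleftrightarrow> h \<in> Arr C \<and> mono C m \<and> ccod C m = ccod C h \<and>
     (\<exists>e. regular_epi C e \<and> e \<in> hom C (cdom C h) (cdom C m) \<and> comp C m e = h)"

definition zero_subobject :: "('o, 'm, 'x) category_scheme \<Rightarrow> 'o \<Rightarrow> 'm \<Rightarrow> bool" where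
  "zero_subobject C Y m \<longleftrightarrow> mono C m \<and> ccod C m = Y \<and>
     (\<exists>Z z \<phi>. zero_obj C Z \<and> z \<in> hom C Z Y \<and> iso C \<phi> \<and> \<phi> \<in> hom C (cdom C m) Z \<and>
        comp C z \<phi> = m)"

definition rel_commute :: "('o, 'm, 'x) category_scheme \<Rightarrow> 'm \<Rightarrow> 'm \<Rightarrow> 'm \<Rightarrow> 'm \<Rightarrow> bool" where
  "rel_commute C k s f g \<longleftrightarrow>
     (\<exists>\<phi>. \<phi> \<in> hom C (ccod C k) (ccod C f) \<and> comp C \<phi> k = f \<and> comp C \<phi> s = g)"

definition extremally_epic_cospan :: "('o, 'm, 'x) category_scheme \<Rightarrow> 'm \<Rightarrow> 'm \<Rightarrow> bool" where
  "extremally_epic_cospan C k s \<longleftrightarrow> k \<in> Arr C \<and> s \<in> Arr C \<and> ccod C k = ccod C s \<and>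
     (\<forall>m k' s'. mono C m \<and> ccod C m = ccod C k \<and>
        k' \<in> hom C (cdom C k) (cdom C m) \<and> s' \<in> hom C (cdom C s) (cdom C m) \<and>
        comp C m k' = k \<and> comp C m s' = s \<longrightarrow> iso C m)"

definition rel_commutator :: "('o, 'm, 'x) category_scheme \<Rightarrow> 'm \<Rightarrow> 'm \<Rightarrow> 'm \<Rightarrow> 'm \<Rightarrow> 'm \<Rightarrow> bool" where
  "rel_commutator C k s f g m \<longleftrightarrow>
     (\<exists>P i1 i2 u \<kappa> c. coproduct C (cdom C k) (cdom C s) P i1 i2 \<and>
        u \<in> hom C P (ccod C k) \<and> comp C u i1 = k \<and> comp C u i2 = s \<and>
        kernel C u \<kappa> \<and>
        c \<in> hom C P (ccod C f) \<and> comp C c i1 = f \<and> comp C c i2 = g \<and>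
        image_of C (comp C c \<kappa>) m)"

end

theory Submission
  imports Defs
begin

lemma hom_iff: "f \<in> hom C a b \<longleftrightarrow> f \<in> Arr C \<and> cdom C f = a \<and> ccod C f = b"
  by (simp add: hom_def)


lemma zero_objD:
  assumes "zero_obj C Z"
  shows "Z \<in> Obj C" "\<forall>a\<in>Obj C. \<exists>!f. f \<in> hom C a Z" "\<forall>a\<in>Obj C. \<exists>!f. f \<in> hom C Z a"
  using assms unfolding zero_obj_def terminal_def initial_def by simp_all

lemma term_uniq: "zero_obj C Z \<Longrightarrow> a \<in> Obj C \<Longrightarrow> x \<in> hom C a Z \<Longrightarrow> y \<in> hom C a Z \<Longrightarrow> x = y"
  using zero_objD(2) by (metis (no_types, lifting))
lemma init_uniq: "zero_obj C Z \<Longrightarrow> a \<in> Obj C \<Longrightarrow> x \<in> hom C Z a \<Longrightarrow> y \<in> hom C Z a \<Longrightarrow> x = y"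
  using zero_objD(3) by (metis (no_types, lifting))
lemma term_ex: "zero_obj C Z \<Longrightarrow> a \<in> Obj C \<Longrightarrow> \<exists>x. x \<in> hom C a Z"
  using zero_objD(2) by metis
lemma init_ex: "zero_obj C Z \<Longrightarrow> a \<in> Obj C \<Longrightarrow> \<exists>x. x \<in> hom C Z a"
  using zero_objD(3) by metis


lemma coeqD: "coequalizer C f g q \<Longrightarrow> comp C q f = comp C q g"
  by (simp add: coequalizer_def)
lemma coeq_regepi: "coequalizer C f g q \<Longrightarrow> regular_epi C q"
  unfolding regular_epi_def by blast
lemma normal_catD: "normal_category C \<Longrightarrow> regular_category C"
  "normal_category C \<Longrightarrow> regular_epi C q \<Longrightarrow> normal_epi C q"
  by (simp_all add: normal_category_def)
lemma regD: "regular_category C \<Longrightarrow> category C"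
  "regular_category C \<Longrightarrow> pullback C f f p1 p2 \<Longrightarrow> \<exists>q. coequalizer C p1 p2 q"
  "regular_category C \<Longrightarrow> regular_epi C e \<Longrightarrow> pullback C f e p1 p2 \<Longrightarrow> regular_epi C p1"
  "regular_category C \<Longrightarrow> f \<in> Arr C \<Longrightarrow> g \<in> Arr C \<Longrightarrow> ccod C f = ccod C g \<Longrightarrow> \<exists>p1 p2. pullback C f g p1 p2"
  by (unfold regular_category_def finitely_complete_def; blast)+
lemma kernelD: "kernel C u \<kappa> \<Longrightarrow> \<kappa> \<in> hom C (cdom C \<kappa>) (cdom C u)"
  "kernel C u \<kappa> \<Longrightarrow> zero_mor C (cdom C \<kappa>) (ccod C u) (comp C u \<kappa>)"
  by (simp_all add: kernel_def hom_def)
lemma kernel_univ: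
  assumes "kernel C u \<kappa>" "h \<in> hom C E (cdom C u)" "zero_mor C E (ccod C u) (comp C u h)"
  shows "\<exists>v \<in> hom C E (cdom C \<kappa>). comp C \<kappa> v = h"
proof -
  have U: "\<forall>h \<in> Arr C. ccod C h = cdom C u \<and> zero_mor C (cdom C h) (ccod C u) (comp C u h) \<longrightarrow>
        (\<exists>!v. v \<in> hom C (cdom C h) (cdom C \<kappa>) \<and> comp C \<kappa> v = h)"
    using assms(1) by (simp add: kernel_def)
  have a: "h \<in> Arr C" "cdom C h = E" "ccod C h = cdom C u" using assms(2) by (simp_all add: hom_def)
  have "\<exists>!v. v \<in> hom C (cdom C h) (cdom C \<kappa>) \<and> comp C \<kappa> v = h"
    using U[rule_format, OF a(1)] a assms(3) by simp
  thus ?thesis using a(2) by auto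
qed
lemma isoD: "iso C f \<Longrightarrow> \<exists>g \<in> hom C (ccod C f) (cdom C f). comp C g f = cid C (cdom C f)"
  unfolding iso_def by blast
lemma isoI: "f \<in> Arr C \<Longrightarrow> g \<in> hom C (ccod C f) (cdom C f) \<Longrightarrow> comp C g f = cid C (cdom C f) \<Longrightarrow>
   comp C f g = cid C (ccod C f) \<Longrightarrow> iso C f"
  unfolding iso_def by blast
lemma extremalD:
  assumes "extremally_epic_cospan C k s" "mono C m" "ccod C m = ccod C k"
    "k' \<in> hom C (cdom C k) (cdom C m)" "s' \<in> hom C (cdom C s) (cdom C m)"
    "comp C m k' = k" "comp C m s' = s"
  shows "iso C m"
proof -
  have "\<forall>m k' s'. mono C m \<and> ccod C m = ccod C k \<and>
        k' \<in> hom C (cdom C k) (cdom C m) \<and> s' \<in> hom C (cdom C s) (cdom C m) \<and>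
        comp C m k' = k \<and> comp C m s' = s \<longrightarrow> iso C m" using assms(1) by (simp add: extremally_epic_cospan_def)
  thus ?thesis using assms(2-) by blast
qed
lemma image_ofD: "image_of C h m \<Longrightarrow> mono C m" "image_of C h m \<Longrightarrow> ccod C m = ccod C h"
  "image_of C h m \<Longrightarrow> \<exists>e. regular_epi C e \<and> e \<in> hom C (cdom C h) (cdom C m) \<and> comp C m e = h"
  by (simp_all add: image_of_def)
lemma normal_epiD: "normal_epi C q \<Longrightarrow> \<exists>k z. zero_mor C (cdom C k) (ccod C k) z \<and> coequalizer C k z q"
  by (simp add: normal_epi_def)
lemma coprodD: "coproduct C X B P i1 i2 \<Longrightarrow> i1 \<in> hom C X P"
  "coproduct C X B P i1 i2 \<Longrightarrow> i2 \<in> hom C B P"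
  by (simp_all add: coproduct_def)
lemma coprod_uniq:
  assumes "coproduct C X B P i1 i2" "Z \<in> Obj C" "f \<in> hom C X Z" "g \<in> hom C B Z"
    "a \<in> hom C P Z" "comp C a i1 = f" "comp C a i2 = g"
    "b \<in> hom C P Z" "comp C b i1 = f" "comp C b i2 = g"
  shows "a = b"
proof -
  have "\<forall>Z \<in> Obj C. \<forall>f \<in> hom C X Z. \<forall>g \<in> hom C B Z.
        (\<exists>!u. u \<in> hom C P Z \<and> comp C u i1 = f \<and> comp C u i2 = g)" using assms(1) by (simp add: coproduct_def)
  hence "\<exists>!u. u \<in> hom C P Z \<and> comp C u i1 = f \<and> comp C u i2 = g" using assms(2,3,4) by blast
  thus ?thesis using assms(5-) by blast
qed
lemma zero_subobjectD: "zero_subobject C Y m \<Longrightarrow> \<exists>Z z \<phi>. zero_obj C Z \<and> z \<in> hom C Z Y \<and> \<phi> \<in> hom C (cdom C m) Z \<and>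
        comp C z \<phi> = m"
  unfolding zero_subobject_def by blast
lemma rel_commutatorD:
  assumes "rel_commutator C k s f g m"
  obtains P i1 i2 u \<kappa> c where "coproduct C (cdom C k) (cdom C s) P i1 i2"
        "u \<in> hom C P (ccod C k)" "comp C u i1 = k" "comp C u i2 = s"
        "kernel C u \<kappa>"
        "c \<in> hom C P (ccod C f)" "comp C c i1 = f" "comp C c i2 = g"
        "image_of C (comp C c \<kappa>) m"
  using assms unfolding rel_commutator_def by blast


lemma coeq_arrs: "coequalizer C f g q \<Longrightarrow> f \<in> Arr C \<and> g \<in> Arr C \<and> cdom C f = cdom C g \<and> ccod C f = ccod C g \<and> cdom C q = ccod C f"
  by (simp add: coequalizer_def)
lemma zero_mor_hom: "zero_mor C a b f \<Longrightarrow> f \<in> hom C a b"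
  by (simp add: zero_mor_def)
lemma zero_morD: "zero_mor C a b f \<Longrightarrow> \<exists>Z g h. zero_obj C Z \<and> g \<in> hom C a Z \<and> h \<in> hom C Z b \<and> f = comp C h g"
  by (simp add: zero_mor_def)
lemma zero_morI: "zero_obj C Z \<Longrightarrow> g \<in> hom C a Z \<Longrightarrow> h \<in> hom C Z b \<Longrightarrow> f \<in> hom C a b \<Longrightarrow> f = comp C h g \<Longrightarrow> zero_mor C a b f"
  unfolding zero_mor_def by blast
lemma mono_arr: "mono C m \<Longrightarrow> m \<in> Arr C" by (simp add: mono_def)
lemma rel_commuteD: "rel_commute C k s f g \<Longrightarrow> \<exists>\<phi>. \<phi> \<in> hom C (ccod C k) (ccod C f) \<and> comp C \<phi> k = f \<and> comp C \<phi> s = g"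
  by (simp add: rel_commute_def)
lemma rel_commuteI: "\<phi> \<in> hom C (ccod C k) (ccod C f) \<Longrightarrow> comp C \<phi> k = f \<Longrightarrow> comp C \<phi> s = g \<Longrightarrow> rel_commute C k s f g"
  unfolding rel_commute_def by blast
lemma zero_subobjectI: "mono C m \<Longrightarrow> ccod C m = Y \<Longrightarrow> zero_obj C Z \<Longrightarrow> z \<in> hom C Z Y \<Longrightarrow> iso C \<phi> \<Longrightarrow>
  \<phi> \<in> hom C (cdom C m) Z \<Longrightarrow> comp C z \<phi> = m \<Longrightarrow> zero_subobject C Y m"
  unfolding zero_subobject_def by blast

context
  fixes C :: "('o, 'm, 'x) category_scheme"
  assumes cat: "category C"
begin

lemma arr_hom: "f \<in> Arr C \<Longrightarrow> f \<in> hom C (cdom C f) (ccod C f)"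
  by (simp add: hom_def)

lemma cod_obj: "f \<in> hom C a b \<Longrightarrow> b \<in> Obj C"
  using cat unfolding category_def hom_def by auto

lemma dom_obj: "f \<in> hom C a b \<Longrightarrow> a \<in> Obj C"
  using cat unfolding category_def hom_def by auto

lemma comp_in: "f \<in> hom C a b \<Longrightarrow> g \<in> hom C b c \<Longrightarrow> comp C g f \<in> hom C a c"
  using cat unfolding category_def hom_def by auto

lemma assoc: "f \<in> hom C a b \<Longrightarrow> g \<in> hom C b c \<Longrightarrow> h \<in> hom C c d \<Longrightarrow>
   comp C h (comp C g f) = comp C (comp C h g) f"
  using cat unfolding category_def hom_def by auto

lemma id_in: "a \<in> Obj C \<Longrightarrow> cid C a \<in> hom C a a"
  using cat unfolding category_def by auto

lemma idl: "f \<in> hom C a b \<Longrightarrow> comp C (cid C b) f = f"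
  using cat unfolding category_def hom_def by auto

lemma idr: "f \<in> hom C a b \<Longrightarrow> comp C f (cid C a) = f"
  using cat unfolding category_def hom_def by auto

lemma coeq_univ:
  assumes "coequalizer C f g q" "r \<in> hom C (ccod C f) W" "comp C r f = comp C r g"
  shows "\<exists>v \<in> hom C (ccod C q) W. comp C v q = r"
  using assms unfolding coequalizer_def hom_def by blast

lemma coeq_hom: "coequalizer C f g q \<Longrightarrow> q \<in> hom C (ccod C f) (ccod C q)"
  unfolding coequalizer_def hom_def by auto

lemma regepi_cancel:
  assumes "regular_epi C q" "a \<in> hom C (ccod C q) W" "b \<in> hom C (ccod C q) W"
    "comp C a q = comp C b q"
  shows "a = b"
proof -
  obtain f g where co: "coequalizer C f g q" using assms(1) unfolding regular_epi_def by blast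
  have qh: "q \<in> hom C (ccod C f) (ccod C q)" using coeq_hom[OF co] .
  have fh: "f \<in> hom C (cdom C f) (ccod C f)" and gh: "g \<in> hom C (cdom C f) (ccod C f)"
    using co unfolding coequalizer_def hom_def by auto
  have aq: "comp C a q \<in> hom C (ccod C f) W" using comp_in[OF qh assms(2)] .
  have e: "comp C (comp C a q) f = comp C (comp C a q) g"
  proof -
    have "comp C (comp C a q) f = comp C a (comp C q f)" using assoc[OF fh qh assms(2)] by simp
    also have "\<dots> = comp C a (comp C q g)" using co unfolding coequalizer_def by simp
    also have "\<dots> = comp C (comp C a q) g" using assoc[OF gh qh assms(2)] by simp
    finally show ?thesis .
  qed
  have "\<exists>!u. u \<in> hom C (ccod C q) (ccod C (comp C a q)) \<and> comp C u q = comp C a q"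
    using co aq e unfolding coequalizer_def hom_def by blast
  moreover have "ccod C (comp C a q) = W" using aq by (simp add: hom_def)
  ultimately show ?thesis using assms by auto
qed

lemma mono_cancel:
  "mono C m \<Longrightarrow> g \<in> hom C a (cdom C m) \<Longrightarrow> h \<in> hom C a (cdom C m) \<Longrightarrow>
   comp C m g = comp C m h \<Longrightarrow> g = h"
  unfolding mono_def hom_def by auto

lemma pb_hom:
  assumes "pullback C f g p1 p2"
  shows "p1 \<in> hom C (cdom C p1) (cdom C f)" "p2 \<in> hom C (cdom C p1) (cdom C g)"
    "comp C f p1 = comp C g p2" "f \<in> hom C (cdom C f) (ccod C f)" "g \<in> hom C (cdom C g) (ccod C f)"
  using assms unfolding pullback_def hom_def by auto

lemma pb_univ:
  assumes "pullback C f g p1 p2" "q1 \<in> hom C W (cdom C f)" "q2 \<in> hom C W (cdom C g)"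
    "comp C f q1 = comp C g q2"
  shows "\<exists>v \<in> hom C W (cdom C p1). comp C p1 v = q1 \<and> comp C p2 v = q2"
proof -
  have U: "\<forall>q1 \<in> Arr C. \<forall>q2 \<in> Arr C. cdom C q1 = cdom C q2 \<and>
        ccod C q1 = cdom C f \<and> ccod C q2 = cdom C g \<and> comp C f q1 = comp C g q2 \<longrightarrow>
        (\<exists>!u. u \<in> hom C (cdom C q1) (cdom C p1) \<and> comp C p1 u = q1 \<and> comp C p2 u = q2)"
    using assms(1) unfolding pullback_def by (elim conjE)
  have a: "q1 \<in> Arr C" "q2 \<in> Arr C" "cdom C q1 = W" "cdom C q2 = W" "ccod C q1 = cdom C f" "ccod C q2 = cdom C g"
    using assms(2,3) unfolding hom_def by auto
  have "\<exists>!u. u \<in> hom C (cdom C q1) (cdom C p1) \<and> comp C p1 u = q1 \<and> comp C p2 u = q2"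
    using U[rule_format, OF a(1) a(2)] a assms(4) by simp
  thus ?thesis using a(3) by auto
qed

lemma zero_eq:
  assumes "zero_mor C a b f" "zero_mor C a b f'"
  shows "f = f'"
proof -
  obtain Z g h where Z: "zero_obj C Z" "g \<in> hom C a Z" "h \<in> hom C Z b" "f = comp C h g"
    using assms(1) unfolding zero_mor_def by blast
  obtain Z' g' h' where Z': "zero_obj C Z'" "g' \<in> hom C a Z'" "h' \<in> hom C Z' b" "f' = comp C h' g'"
    using assms(2) unfolding zero_mor_def by blast
  have Z'o: "Z' \<in> Obj C" using zero_objD(1)[OF Z'(1)] .
  obtain t where t: "t \<in> hom C Z Z'" using init_ex[OF Z(1) Z'o] by blast
  have ao: "a \<in> Obj C" using dom_obj[OF Z(2)] .
  have bo: "b \<in> Obj C" using cod_obj[OF Z(3)] .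
  have "comp C t g \<in> hom C a Z'" using comp_in[OF Z(2) t] .
  hence g': "g' = comp C t g" using term_uniq[OF Z'(1) ao] Z'(2) by blast
  have "comp C h' t \<in> hom C Z b" using comp_in[OF t Z'(3)] .
  hence h: "h = comp C h' t" using init_uniq[OF Z(1) bo] Z(3) by blast
  have "f = comp C (comp C h' t) g" using Z(4) h by simp
  also have "\<dots> = comp C h' (comp C t g)" using assoc[OF Z(2) t Z'(3)] by simp
  also have "\<dots> = f'" using Z'(4) g' by simp
  finally show ?thesis .
qed

lemma zero_compr:
  assumes "zero_mor C a b f" "g \<in> hom C a' a"
  shows "zero_mor C a' b (comp C f g)"
proof -
  obtain Z x h where Z: "zero_obj C Z" "x \<in> hom C a Z" "h \<in> hom C Z b" "f = comp C h x"
    using assms(1) unfolding zero_mor_def by blast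
  have "comp C f g = comp C h (comp C x g)" using assoc[OF assms(2) Z(2) Z(3)] Z(4) by simp
  moreover have "comp C x g \<in> hom C a' Z" using comp_in[OF assms(2) Z(2)] .
  moreover have "comp C f g \<in> hom C a' b" using comp_in[OF assms(2), of f b] assms(1) unfolding zero_mor_def by blast
  ultimately show ?thesis unfolding zero_mor_def using Z(1,2,3) by blast
qed

lemma zero_compl:
  assumes "zero_mor C a b f" "h' \<in> hom C b b'"
  shows "zero_mor C a b' (comp C h' f)"
proof -
  obtain Z x h where Z: "zero_obj C Z" "x \<in> hom C a Z" "h \<in> hom C Z b" "f = comp C h x"
    using assms(1) unfolding zero_mor_def by blast
  have "comp C h' f = comp C (comp C h' h) x" using assoc[OF Z(2) Z(3) assms(2)] Z(4) by simp
  moreover have "comp C h' h \<in> hom C Z b'" using comp_in[OF Z(3) assms(2)] .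
  moreover have "comp C h' f \<in> hom C a b'" using comp_in[OF _ assms(2), of f a] assms(1) unfolding zero_mor_def by blast
  ultimately show ?thesis unfolding zero_mor_def using Z(1,2,3) by blast
qed

end


context
  fixes C :: "('o, 'm, 'x) category_scheme"
  assumes reg: "regular_category C"
begin

lemma rcat: "category C" using regD(1)[OF reg] .

lemma pb_exists: "f \<in> Arr C \<Longrightarrow> g \<in> Arr C \<Longrightarrow> ccod C f = ccod C g \<Longrightarrow> \<exists>p1 p2. pullback C f g p1 p2"
  using regD(4)[OF reg] by blast

lemma pb_stable: "regular_epi C e \<Longrightarrow> pullback C f e p1 p2 \<Longrightarrow> regular_epi C p1"
  using regD(3)[OF reg] by blast

lemma image_mono:
  assumes pb: "pullback C u u p1 p2" and co: "coequalizer C p1 p2 q"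
    and mh: "m \<in> hom C (ccod C q) (ccod C u)" and mq: "comp C m q = u"
  shows "mono C m"
proof -
  note cat = rcat
  define P where "P = cdom C u"
  define Q where "Q = ccod C q"
  define A where "A = ccod C u"
  define R where "R = cdom C p1"
  have p1h: "p1 \<in> hom C R P" and p2h: "p2 \<in> hom C R P" and uh: "u \<in> hom C P A"
    using pb_hom[OF cat pb] unfolding R_def P_def A_def by auto
  have qh: "q \<in> hom C P Q" using coeq_hom[OF cat co] p1h unfolding Q_def hom_iff by auto
  have mh': "m \<in> hom C Q A" using mh unfolding Q_def A_def .
  have qe: "comp C q p1 = comp C q p2" using coeqD[OF co] .
  have qre: "regular_epi C q" using coeq_regepi[OF co] .
  obtain r1 r2 where pr: "pullback C m m r1 r2"
    using pb_exists[of m m] mh' unfolding hom_iff by blast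
  define K where "K = cdom C r1"
  have r1h: "r1 \<in> hom C K Q" and r2h: "r2 \<in> hom C K Q" and mr: "comp C m r1 = comp C m r2"
    using pb_hom[OF cat pr] mh' unfolding K_def hom_iff by auto
  obtain a1 a2 where pa: "pullback C r1 q a1 a2"
    using pb_exists[of r1 q] r1h qh unfolding hom_iff by metis
  define L where "L = cdom C a1"
  have a1h: "a1 \<in> hom C L K" and a2h: "a2 \<in> hom C L P" and ra: "comp C r1 a1 = comp C q a2"
    using pb_hom[OF cat pa] r1h qh unfolding L_def hom_iff by auto
  have a1re: "regular_epi C a1" using pb_stable[OF qre pa] .
  have r2a: "comp C r2 a1 \<in> hom C L Q" using comp_in[OF cat a1h r2h] .
  obtain b1 b2 where pb2: "pullback C (comp C r2 a1) q b1 b2"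
    using pb_exists[of "comp C r2 a1" q] r2a qh unfolding hom_iff by metis
  define M where "M = cdom C b1"
  have b1h: "b1 \<in> hom C M L" and b2h: "b2 \<in> hom C M P" and rb: "comp C (comp C r2 a1) b1 = comp C q b2"
    using pb_hom[OF cat pb2] r2a qh unfolding M_def hom_iff by auto
  have b1re: "regular_epi C b1" using pb_stable[OF qre pb2] .
  have ab: "comp C a2 b1 \<in> hom C M P" using comp_in[OF cat b1h a2h] .
  have "comp C u (comp C a2 b1) = comp C u b2"
  proof -
    have "comp C u (comp C a2 b1) = comp C (comp C m q) (comp C a2 b1)" using mq by simp
    also have "\<dots> = comp C m (comp C (comp C q a2) b1)"
      using assoc[OF cat ab qh mh'] assoc[OF cat b1h a2h qh] by simp
    also have "\<dots> = comp C m (comp C (comp C r1 a1) b1)" using ra by simp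
    also have "\<dots> = comp C (comp C m r1) (comp C a1 b1)"
      using assoc[OF cat b1h a1h r1h] assoc[OF cat comp_in[OF cat b1h a1h] r1h mh'] by simp
    also have "\<dots> = comp C (comp C m r2) (comp C a1 b1)" using mr by simp
    also have "\<dots> = comp C m (comp C (comp C r2 a1) b1)"
      using assoc[OF cat b1h a1h r2h] assoc[OF cat comp_in[OF cat b1h a1h] r2h mh'] by simp
    also have "\<dots> = comp C m (comp C q b2)" using rb by simp
    also have "\<dots> = comp C u b2" using assoc[OF cat b2h qh mh'] mq by simp
    finally show ?thesis .
  qed
  then obtain w where wh: "w \<in> hom C M R" and w1: "comp C p1 w = comp C a2 b1" and w2: "comp C p2 w = b2"
    using pb_univ[OF cat pb, of "comp C a2 b1" M b2] ab b2h unfolding R_def P_def by auto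
  have "comp C (comp C r1 a1) b1 = comp C (comp C r2 a1) b1"
  proof -
    have "comp C (comp C r1 a1) b1 = comp C q (comp C a2 b1)"
      using ra assoc[OF cat b1h a2h qh] by simp
    also have "\<dots> = comp C (comp C q p1) w" using w1 assoc[OF cat wh p1h qh] by simp
    also have "\<dots> = comp C (comp C q p2) w" using qe by simp
    also have "\<dots> = comp C q b2" using w2 assoc[OF cat wh p2h qh] by simp
    finally show ?thesis using rb by simp
  qed
  hence "comp C r1 a1 = comp C r2 a1"
    using regepi_cancel[OF cat b1re, of "comp C r1 a1" Q "comp C r2 a1"] comp_in[OF cat a1h r1h] r2a b1h
    unfolding hom_iff by auto
  hence r12: "r1 = r2"
    using regepi_cancel[OF cat a1re, of r1 Q r2] r1h r2h a1h unfolding hom_iff by auto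
  show ?thesis unfolding mono_def
  proof (intro conjI ballI impI)
    show "m \<in> Arr C" using mh by (simp add: hom_iff)
    fix g h assume g: "g \<in> Arr C" and h: "h \<in> Arr C" and
      c: "ccod C g = cdom C m \<and> ccod C h = cdom C m \<and> cdom C g = cdom C h \<and> comp C m g = comp C m h"
    have gh': "g \<in> hom C (cdom C g) (cdom C m)" using g c by (simp add: hom_iff)
    have hh': "h \<in> hom C (cdom C g) (cdom C m)" using h c by (simp add: hom_iff)
    have "comp C m g = comp C m h" using c by simp
    then obtain v where "comp C r1 v = g" "comp C r2 v = h"
      using pb_univ[OF cat pr gh' hh'] by blast
    thus "g = h" using r12 by simp
  qed
qed

end


theorem mainTheorem4:
  fixes C :: "('o, 'm, 'x) category_scheme"
    and X A B Y :: 'o and k s f g m :: 'm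
  assumes "normal_category C"
    and "k \<in> hom C X A" and "s \<in> hom C B A"
    and "extremally_epic_cospan C k s"
    and "f \<in> hom C X Y" and "g \<in> hom C B Y"
    and "rel_commutator C k s f g m"
  shows "rel_commute C k s f g \<longleftrightarrow> zero_subobject C Y m"
proof -
  have reg: "regular_category C" using normal_catD(1)[OF assms(1)] .
  have cat: "category C" using rcat[OF reg] .
  have kh: "k \<in> hom C X A" and sh: "s \<in> hom C B A" and fh: "f \<in> hom C X Y" and gh: "g \<in> hom C B Y"
    using assms by auto
  obtain P i1 i2 u \<kappa> c where cop: "coproduct C X B P i1 i2" and
    uh: "u \<in> hom C P A" and u1: "comp C u i1 = k" and u2: "comp C u i2 = s" and
    ker: "kernel C u \<kappa>" and ch: "c \<in> hom C P Y" and c1: "comp C c i1 = f" and c2: "comp C c i2 = g" and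
    img: "image_of C (comp C c \<kappa>) m"
  proof -
    have X: "cdom C k = X" "cdom C s = B" "ccod C k = A" "ccod C f = Y"
      using kh sh fh unfolding hom_iff by auto
    show ?thesis using rel_commutatorD[OF assms(7)] that unfolding X by blast
  qed
  have i1h: "i1 \<in> hom C X P" and i2h: "i2 \<in> hom C B P" using coprodD[OF cop] by auto
  define D where "D = cdom C \<kappa>"
  have \<kappa>h: "\<kappa> \<in> hom C D P" using kernelD(1)[OF ker] uh unfolding D_def hom_iff by auto
  have u\<kappa>: "zero_mor C D A (comp C u \<kappa>)" using kernelD(2)[OF ker] uh unfolding D_def hom_iff by auto
  have ck: "comp C c \<kappa> \<in> hom C D Y" using comp_in[OF cat \<kappa>h ch] .
  define M where "M = cdom C m"
  have mmono: "mono C m" using image_ofD(1)[OF img] .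
  have mh: "m \<in> hom C M Y" using mono_arr[OF mmono] image_ofD(2)[OF img] ck unfolding M_def hom_iff by simp
  obtain e where ere: "regular_epi C e" and eh: "e \<in> hom C D M" and me: "comp C m e = comp C c \<kappa>"
    using image_ofD(3)[OF img] ck unfolding M_def hom_iff by auto
  have Yo: "Y \<in> Obj C" using cod_obj[OF cat fh] .
  have Mo: "M \<in> Obj C" using dom_obj[OF cat mh] .
  have Do: "D \<in> Obj C" using dom_obj[OF cat eh] .
  show ?thesis
  proof
    assume "rel_commute C k s f g"
    then obtain \<phi> where \<phi>h: "\<phi> \<in> hom C A Y" and \<phi>1: "comp C \<phi> k = f" and \<phi>2: "comp C \<phi> s = g"
      using rel_commuteD[of C k s f g] kh fh unfolding hom_iff by auto
    have \<phi>u: "comp C \<phi> u \<in> hom C P Y" using comp_in[OF cat uh \<phi>h] .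
    have "comp C (comp C \<phi> u) i1 = f" using assoc[OF cat i1h uh \<phi>h] u1 \<phi>1 by simp
    moreover have "comp C (comp C \<phi> u) i2 = g" using assoc[OF cat i2h uh \<phi>h] u2 \<phi>2 by simp
    ultimately have "c = comp C \<phi> u" using coprod_uniq[OF cop Yo fh gh ch c1 c2 \<phi>u] by simp
    hence "comp C c \<kappa> = comp C \<phi> (comp C u \<kappa>)" using assoc[OF cat \<kappa>h uh \<phi>h] by simp
    hence zc: "zero_mor C D Y (comp C c \<kappa>)" using zero_compl[OF cat u\<kappa> \<phi>h] by simp
    then obtain Z g0 h where Z: "zero_obj C Z" "g0 \<in> hom C D Z" "h \<in> hom C Z Y" "comp C c \<kappa> = comp C h g0"
      using zero_morD[OF zc] by blast
    obtain \<phi>' where \<phi>'h: "\<phi>' \<in> hom C M Z" using term_ex[OF Z(1) Mo] by blast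
    obtain \<psi> where \<psi>h: "\<psi> \<in> hom C Z M" using init_ex[OF Z(1) Mo] by blast
    have Zo: "Z \<in> Obj C" using zero_objD(1)[OF Z(1)] .
    have "comp C \<phi>' e = g0" using term_uniq[OF Z(1) Do comp_in[OF cat eh \<phi>'h] Z(2)] .
    hence "comp C (comp C h \<phi>') e = comp C m e" using assoc[OF cat eh \<phi>'h Z(3)] Z(4) me by simp
    hence h\<phi>: "comp C h \<phi>' = m"
      using regepi_cancel[OF cat ere, of "comp C h \<phi>'" Y m] comp_in[OF cat \<phi>'h Z(3)] mh eh
      unfolding hom_iff by auto
    have "comp C \<phi>' \<psi> = cid C Z"
      using term_uniq[OF Z(1) Zo comp_in[OF cat \<psi>h \<phi>'h] id_in[OF cat Zo]] .
    moreover have "comp C \<psi> \<phi>' = cid C M"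
    proof -
      have "comp C m \<psi> = h"
        using init_uniq[OF Z(1) Yo comp_in[OF cat \<psi>h mh] Z(3)] .
      hence "comp C m (comp C \<psi> \<phi>') = comp C m (cid C M)"
        using assoc[OF cat \<phi>'h \<psi>h mh] h\<phi> idr[OF cat mh] by simp
      thus ?thesis using mono_cancel[OF cat mmono] comp_in[OF cat \<phi>'h \<psi>h] id_in[OF cat Mo]
        unfolding M_def by blast
    qed
    ultimately have "iso C \<phi>'" using isoI[of \<phi>' C \<psi>] \<phi>'h \<psi>h unfolding hom_iff by auto
    thus "zero_subobject C Y m"
      using zero_subobjectI[OF mmono _ Z(1) Z(3), of \<phi>'] mh \<phi>'h h\<phi> unfolding M_def hom_iff by auto
  next
    assume "zero_subobject C Y m"
    then obtain Z z \<phi>0 where Z: "zero_obj C Z" "z \<in> hom C Z Y" "\<phi>0 \<in> hom C M Z" "comp C z \<phi>0 = m"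
      using zero_subobjectD[of C Y m] unfolding M_def by auto
    have "comp C c \<kappa> = comp C z (comp C \<phi>0 e)" using assoc[OF cat eh Z(3) Z(2)] Z(4) me by simp
    hence zc: "zero_mor C D Y (comp C c \<kappa>)"
      using zero_morI[OF Z(1) comp_in[OF cat eh Z(3)] Z(2) ck] by simp
    obtain p1 p2 where pb: "pullback C u u p1 p2" using pb_exists[OF reg] uh unfolding hom_iff by blast
    have p1h: "p1 \<in> hom C (cdom C p1) P" and p2h: "p2 \<in> hom C (cdom C p1) P" and pe: "comp C u p1 = comp C u p2"
      using pb_hom[OF cat pb] uh unfolding hom_iff by auto
    obtain q where co: "coequalizer C p1 p2 q" using regD(2)[OF reg pb] by blast
    define Q where "Q = ccod C q"
    have qh: "q \<in> hom C P Q" using coeq_hom[OF cat co] p1h unfolding Q_def hom_iff by auto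
    have uh': "u \<in> hom C (ccod C p1) A" using uh p1h by (simp add: hom_iff)
    obtain m' where m'h: "m' \<in> hom C Q A" and m'q: "comp C m' q = u"
      using coeq_univ[OF cat co uh' pe] unfolding Q_def by blast
    have m'mono: "mono C m'" using image_mono[OF reg pb co, of m'] m'h m'q uh unfolding Q_def hom_iff by auto
    have qi1: "comp C q i1 \<in> hom C X Q" using comp_in[OF cat i1h qh] .
    have qi2: "comp C q i2 \<in> hom C B Q" using comp_in[OF cat i2h qh] .
    have mk: "comp C m' (comp C q i1) = k" using assoc[OF cat i1h qh m'h] m'q u1 by simp
    have ms: "comp C m' (comp C q i2) = s" using assoc[OF cat i2h qh m'h] m'q u2 by simp
    have "iso C m'" using assms(4) m'mono m'h kh sh qi1 qi2 mk ms
      using extremalD[OF assms(4) m'mono, of "comp C q i1" "comp C q i2"] unfolding hom_iff by auto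
    then obtain minv where minvh0: "minv \<in> hom C (ccod C m') (cdom C m')" and minv0: "comp C minv m' = cid C (cdom C m')"
      using isoD[of C m'] by blast
    have dcm: "cdom C m' = Q" "ccod C m' = A" using m'h by (simp_all add: hom_iff)
    have minvh: "minv \<in> hom C A Q" using minvh0 dcm by simp
    have minv: "comp C minv m' = cid C Q" using minv0 dcm by simp
    have "regular_epi C q" using coeq_regepi[OF co] .
    hence "normal_epi C q" using normal_catD(2)[OF assms(1)] by blast
    then obtain k' z' where z': "zero_mor C (cdom C k') (ccod C k') z'" and co2: "coequalizer C k' z' q"
      using normal_epiD[of C q] by blast
    define E where "E = cdom C k'"
    have k'h: "k' \<in> hom C E P" and z'h: "z' \<in> hom C E P"
      using coeq_arrs[OF co2] qh zero_mor_hom[OF z'] unfolding hom_iff E_def by auto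
    have z'0: "zero_mor C E P z'" using z' k'h unfolding E_def hom_iff by auto
    have "comp C u k' = comp C u z'"
      using coeqD[OF co2] m'q assoc[OF cat k'h qh m'h] assoc[OF cat z'h qh m'h] by metis
    hence zu: "zero_mor C E A (comp C u k')" using zero_compl[OF cat z'0 uh] by simp
    have dcu: "cdom C u = P" "ccod C u = A" using uh by (simp_all add: hom_iff)
    have k'h': "k' \<in> hom C E (cdom C u)" using k'h dcu by simp
    have zu': "zero_mor C E (ccod C u) (comp C u k')" using zu dcu by simp
    obtain v where vh: "v \<in> hom C E D" and kv: "comp C \<kappa> v = k'"
      using kernel_univ[OF ker k'h' zu'] unfolding D_def by blast
    have "comp C c k' = comp C (comp C c \<kappa>) v" using kv assoc[OF cat vh \<kappa>h ch] by simp
    hence "zero_mor C E Y (comp C c k')" using zero_compr[OF cat zc vh] by simp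
    moreover have "zero_mor C E Y (comp C c z')" using zero_compl[OF cat z'0 ch] .
    ultimately have cze: "comp C c k' = comp C c z'" using zero_eq[OF cat] by blast
    have ch': "c \<in> hom C (ccod C k') Y" using ch k'h by (simp add: hom_iff)
    obtain \<psi> where \<psi>h: "\<psi> \<in> hom C Q Y" and \<psi>q: "comp C \<psi> q = c"
      using coeq_univ[OF cat co2 ch' cze] unfolding Q_def by blast
    define \<phi> where "\<phi> = comp C \<psi> minv"
    have \<phi>h: "\<phi> \<in> hom C A Y" using comp_in[OF cat minvh \<psi>h] \<phi>_def by simp
    have key: "comp C \<phi> m' = \<psi>"
      using assoc[OF cat m'h minvh \<psi>h] minv idr[OF cat \<psi>h] \<phi>_def by simp
    have "comp C \<phi> k = f"
      using mk assoc[OF cat qi1 m'h \<phi>h] key assoc[OF cat i1h qh \<psi>h] \<psi>q c1 by simp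
    moreover have "comp C \<phi> s = g"
      using ms assoc[OF cat qi2 m'h \<phi>h] key assoc[OF cat i2h qh \<psi>h] \<psi>q c2 by simp
    ultimately show "rel_commute C k s f g"
      using rel_commuteI[of \<phi> C k f s g] \<phi>h kh fh unfolding hom_iff by auto
  qed
qed

end
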